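(* Let $\kappa\in(0,1)$ and let $d_A>0$, $\mu>1$, $d_A'>0$, $\pi_1'\in(0,1]$, $\pi_1$, $d_S$ be real numbers satisfying \[ d_S=(\mu-1)\bigl(1-e^{-\pi_1'd_A'/(\mu-1)}\bigr),\qquad d_A=(1-\pi_1')d_A'+d_S,\qquad \pi_1=\frac{d_S}{d_A}, \] together with the "cube root principle" \[ \pi_1=\kappa^{1/3},\qquad 1-e^{-\pi_1'd_A'/(\mu-1)}=\kappa^{1/3}. \] Then \[ \mu=1+d_A,\qquad d_A'=d_A\bigl(1-\kappa^{1/3}-\log(1-\kappa^{1/3})\bigr),\qquad \pi_1'=\Bigl(1-\frac{1-\kappa^{1/3}}{\log(1-\kappa^{1/3})}\Bigr)^{-1}. \]
   Context: In the paper these quantities have the interpretation: $d_A$ mean degree in the agreement graph, $d_A'$ mean agreement multi-degree, $\pi_1'$ proportion of agreement multi-edges that are sibling multi-edges, $d_S$ mean number of distinct sibling neighbours, $\mu$ mean offspring of the latent tree, $\kappa$ the average local clustering coefficient; for the statement only the displayed relations matter. *)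

theory Defs
  imports Complex_Main
begin

end

theory Submission
  imports Defs
begin

theorem lemma9p1:
  fixes \<kappa> dA \<mu> dA' \<pi>1' \<pi>1 dS :: real
  assumes "0 < \<kappa>" "\<kappa> < 1"
    and "dA > 0" "\<mu> > 1" "dA' > 0" "0 < \<pi>1'" "\<pi>1' \<le> 1"
    and "dS = (\<mu> - 1) * (1 - exp (- \<pi>1' * dA' / (\<mu> - 1)))"
    and "dA = (1 - \<pi>1') * dA' + dS"
    and "\<pi>1 = dS / dA"
    and "\<pi>1 = \<kappa> powr (1/3)"
    and "1 - exp (- \<pi>1' * dA' / (\<mu> - 1)) = \<kappa> powr (1/3)"
  shows "\<mu> = 1 + dA
    \<and> dA' = dA * (1 - \<kappa> powr (1/3) - ln (1 - \<kappa> powr (1/3)))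
    \<and> \<pi>1' = inverse (1 - (1 - \<kappa> powr (1/3)) / ln (1 - \<kappa> powr (1/3)))"
proof -
  define c where "c = \<kappa> powr (1/3)"
  have c0: "0 < c" using assms(1) by (simp add: c_def)
  have c1: "c < 1" unfolding c_def using assms(1,2)
    using powr_less_mono2[of "1/3" \<kappa> 1] by simp
  have dS1: "dS = (\<mu> - 1) * c" using assms(8,12) c_def by simp
  have dS2: "dS = c * dA" using assms(3,10,11) c_def by (simp add: field_simps)
  have mu: "\<mu> - 1 = dA" using dS1 dS2 c0 by (simp add: mult.commute)
  define x where "x = \<pi>1' * dA' / dA"
  have ex: "exp (- x) = 1 - c" using assms(12) mu c_def x_def by simp
  have lx: "ln (1 - c) = - x" using ex by (metis ln_exp)
  have lneg: "ln (1 - c) < 0" using c0 c1 by simp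
  have xd: "x * dA = \<pi>1' * dA'" using x_def assms(3) by simp
  have dA'eq: "dA' = dA * (1 - c + x)"
    using assms(9) dS2 xd by (simp add: algebra_simps)
  have pos: "1 - c + x > 0" using lx lneg c1 by linarith
  have "\<pi>1' = x * dA / dA'" using xd assms(5) by simp
  also have "\<dots> = x / (1 - c + x)" using dA'eq assms(3) by simp
  also have "\<dots> = inverse (1 - (1 - c) / ln (1 - c))"
    using lx lneg pos by (simp add: field_simps)
  finally have p: "\<pi>1' = inverse (1 - (1 - c) / ln (1 - c))" .
  show ?thesis using mu dA'eq lx p c_def by simp
qed

end
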